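(* Let $\varepsilon>0$, $r\ge2$ an integer and $a>0$ be constants, and let $p=d/\binom{n-1}{r-1}$. Fix $S\subseteq[n]$ with $|S|\le a\left(\frac{\log d}{d}\right)^{1/(r-1)}n$. If $d$ is sufficiently large in terms of $\varepsilon,r,a$, then with probability $1-\exp(-\Omega(n))$ there is no independent set $T$ of $\mathcal{H}_r(n,p)$ with $|T\cap S|\ge\varepsilon\left(\frac{\log d}{d}\right)^{1/(r-1)}n$.
   Context: $\mathcal{H}_r(n,p)$: random $r$-uniform hypergraph on $[n]$, each $r$-subset an edge independently with probability $p$. An independent set is a vertex set containing no edge. *)

theory Defs
  imports Complex_Main
begin

text \<open>Vertex set [n] is rendered as {..<n}. The possible edges of an r-uniform
hypergraph on [n] are the r-subsets of [n].\<close>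

definition rsubsets :: "nat \<Rightarrow> nat \<Rightarrow> nat set set" where
  "rsubsets n r = {e. e \<subseteq> {..<n} \<and> card e = r}"

definition indep_set :: "nat \<Rightarrow> nat set set \<Rightarrow> nat set \<Rightarrow> bool" where
  "indep_set n G T \<longleftrightarrow> T \<subseteq> {..<n} \<and> (\<forall>e\<in>G. \<not> e \<subseteq> T)"

text \<open>Probability of a property of the random hypergraph H_r(n,p): each r-subset is an
edge independently with probability p, so an edge set G has probability
p^|G| (1-p)^(N-|G|) with N the number of r-subsets.\<close>
definition hprob :: "nat \<Rightarrow> nat \<Rightarrow> real \<Rightarrow> (nat set set \<Rightarrow> bool) \<Rightarrow> real" where
  "hprob n r p P =
     (\<Sum>G\<in>Pow (rsubsets n r).
        if P G then p ^ card G * (1 - p) ^ (card (rsubsets n r) - card G) else 0)"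

end

theory Submission imports Defs begin

lemma pow_sum:
  fixes p q :: real
  assumes "finite B"
  shows "(\<Sum>G\<in>Pow B. p ^ card G * q ^ (card B - card G)) = (p + q) ^ card B"
proof -
  have "(p+q) ^ card B = (\<Prod>x\<in>B. p + q)" by simp
  also have "\<dots> = (\<Sum>X\<in>Pow B. (\<Prod>x\<in>X. p) * (\<Prod>x\<in>B-X. q))"
    by (rule prod_add[OF assms])
  also have "\<dots> = (\<Sum>G\<in>Pow B. p ^ card G * q ^ (card B - card G))"
  proof (rule sum.cong)
    fix X assume "X \<in> Pow B"
    then have "card (B - X) = card B - card X" using assms
      by (meson PowD card_Diff_subset finite_subset)
    then show "(\<Prod>x\<in>X. p) * (\<Prod>x\<in>B-X. q) = p ^ card X * q ^ (card B - card X)" by simp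
  qed simp
  finally show ?thesis by simp
qed

lemma finite_rsubsets: "finite (rsubsets n r)"
  unfolding rsubsets_def by (rule finite_subset[of _ "Pow {..<n}"]) auto

lemma hprob_indep:
  assumes "U \<subseteq> {..<n}"
  shows "hprob n r p (\<lambda>G. \<forall>e\<in>G. \<not> e \<subseteq> U) = (1 - p) ^ (card U choose r)"
proof -
  define R where "R = rsubsets n r"
  define A where "A = {e\<in>R. e \<subseteq> U}"
  have fR: "finite R" unfolding R_def by (rule finite_rsubsets)
  have AR: "A \<subseteq> R" unfolding A_def by auto
  have fA: "finite A" using fR AR finite_subset by blast
  have cA: "card A = card U choose r"
  proof -
    have "A = {e. e \<subseteq> U \<and> card e = r}" unfolding A_def R_def rsubsets_def using assms by auto
    moreover have "finite U" using assms finite_subset by blast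
    ultimately show ?thesis using n_subsets by simp
  qed
  have cR: "card R = card A + card (R - A)"
    proof -
    have "card A \<le> card R" using fR AR by (rule card_mono)
    moreover have "card (R - A) = card R - card A" using fA AR by (rule card_Diff_subset)
    ultimately show ?thesis by simp
  qed
  have set_eq: "{G\<in>Pow R. \<forall>e\<in>G. \<not> e \<subseteq> U} = Pow (R - A)"
    unfolding A_def by auto
  have "hprob n r p (\<lambda>G. \<forall>e\<in>G. \<not> e \<subseteq> U)
      = (\<Sum>G\<in>{G\<in>Pow R. \<forall>e\<in>G. \<not> e \<subseteq> U}. p ^ card G * (1 - p) ^ (card R - card G))"
    unfolding hprob_def R_def[symmetric] by (rule sum.inter_filter[symmetric]) (simp add: fR)
  also have "\<dots> = (\<Sum>G\<in>Pow (R - A). (1-p) ^ card A * (p ^ card G * (1 - p) ^ (card (R-A) - card G)))"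
  proof (rule sum.cong[OF set_eq])
    fix G assume G: "G \<in> Pow (R - A)"
    have "card G \<le> card (R - A)" using G fR by (simp add: card_mono)
    then have "card R - card G = card A + (card (R-A) - card G)" using cR by simp
    then show "p ^ card G * (1 - p) ^ (card R - card G) = (1-p) ^ card A * (p ^ card G * (1 - p) ^ (card (R-A) - card G))"
      by (simp add: power_add)
  qed
  also have "\<dots> = (1-p) ^ card A * (p + (1-p)) ^ card (R - A)"
    by (simp add: sum_distrib_left[symmetric] pow_sum fR)
  finally show ?thesis using cA by simp
qed

lemma hprob_union:
  assumes "0 \<le> p" "p \<le> 1" "finite F" "\<And>G. P G \<Longrightarrow> \<exists>U\<in>F. Q U G"
  shows "hprob n r p P \<le> (\<Sum>U\<in>F. hprob n r p (Q U))"
proof -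
  define R where "R = rsubsets n r"
  define w :: "nat set set \<Rightarrow> real" where "w G = p ^ card G * (1 - p) ^ (card R - card G)" for G
  have w0: "w G \<ge> 0" for G using assms unfolding w_def by simp
  have "hprob n r p P = (\<Sum>G\<in>Pow R. if P G then w G else 0)"
    unfolding hprob_def R_def w_def by simp
  also have "\<dots> \<le> (\<Sum>G\<in>Pow R. \<Sum>U\<in>F. if Q U G then w G else 0)"
  proof (rule sum_mono)
    fix G assume "G \<in> Pow R"
    show "(if P G then w G else 0) \<le> (\<Sum>U\<in>F. if Q U G then w G else 0)"
    proof (cases "P G")
      case True
      then obtain U where U: "U \<in> F" "Q U G" using assms(4) by blast
      have "(\<Sum>U\<in>F. if Q U G then w G else 0) = (if Q U G then w G else 0) + (\<Sum>V\<in>F-{U}. if Q V G then w G else 0)"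
        using U(1) assms(3) by (simp add: sum.remove)
      moreover have "(\<Sum>V\<in>F-{U}. if Q V G then w G else 0) \<ge> 0" by (rule sum_nonneg) (simp add: w0)
      ultimately show ?thesis using True U by simp
    next
      case False then show ?thesis by (simp add: sum_nonneg w0)
    qed
  qed
  also have "\<dots> = (\<Sum>U\<in>F. \<Sum>G\<in>Pow R. if Q U G then w G else 0)" by (rule sum.swap)
  also have "\<dots> = (\<Sum>U\<in>F. hprob n r p (Q U))"
    unfolding hprob_def R_def w_def by simp
  finally show ?thesis .
qed


lemma L_pow:
  fixes y :: real and r :: nat
  assumes "y > 0" "r \<ge> 2"
  shows "(y powr (1 / (real r - 1))) ^ r = y * y powr (1 / (real r - 1))"
proof -
  define L where "L = y powr (1 / (real r - 1))"
  have Lp: "L > 0" unfolding L_def using assms by simp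
  have "L ^ (r - 1) = L powr real (r - 1)" using Lp by (simp add: powr_realpow)
  also have "\<dots> = y powr (1 / (real r - 1) * real (r - 1))" unfolding L_def by (simp add: powr_powr)
  also have "1 / (real r - 1) * real (r - 1) = 1" using assms by (simp add: of_nat_diff)
  finally have "L ^ (r - 1) = y" using assms by simp
  moreover have "L ^ r = L ^ (r - 1) * L" using assms
    by (metis One_nat_def Suc_pred less_2_cases_iff linorder_not_le mult.commute not_less_eq power_Suc zero_less_Suc)
  ultimately show ?thesis unfolding L_def by simp
qed

theorem mainTheorem14:
  fixes \<epsilon> a :: real and r :: nat
  assumes "\<epsilon> > 0" and "r \<ge> 2" and "a > 0"
  shows "\<exists>d0::real. \<forall>d::real. d \<ge> d0 \<longrightarrow>
           (\<exists>c>0. \<exists>N::nat. \<forall>n\<ge>N. \<forall>S::nat set.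
              S \<subseteq> {..<n} \<and> real (card S) \<le> a * (ln d / d) powr (1 / (real r - 1)) * real n \<longrightarrow>
              hprob n r (d / real ((n - 1) choose (r - 1)))
                (\<lambda>G. \<exists>T. indep_set n G T \<and>
                   real (card (T \<inter> S)) \<ge> \<epsilon> * (ln d / d) powr (1 / (real r - 1)) * real n)
              \<le> exp (- c * real n))"
proof -
  note eps = assms(1) and r2 = assms(2) and a0 = assms(3)
  define K where "K = 2 * a * ln 2 * real r ^ r / \<epsilon> ^ r"
  define d0 where "d0 = max 3 (exp K)"
  show ?thesis
  proof (rule exI[of _ d0], intro allI impI)
    fix d :: real assume dd0: "d \<ge> d0"
    have d3: "d \<ge> 3" using dd0 unfolding d0_def by simp
    have dK: "ln d \<ge> K" using dd0 d3 unfolding d0_def by (simp add: ln_ge_iff)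
    have lnd: "ln d > 0" using d3 by simp
    have ldd: "ln d / d > 0" using lnd d3 by simp
    define L where "L = (ln d / d) powr (1 / (real r - 1))"
    have L0: "L > 0" unfolding L_def using ldd lnd d3 by simp
    have Lr: "L ^ r = (ln d / d) * L" unfolding L_def using L_pow[OF ldd r2] .
    define x where "x = \<epsilon> * L"
    have x0: "x > 0" unfolding x_def using eps L0 by simp
    define c where "c = a * ln 2 * L"
    have c0: "c > 0" unfolding c_def using a0 L0 by simp
    define N where "N = nat \<lceil>real r / x\<rceil> + nat \<lceil>(real r - 1) * d\<rceil> + 2"
    show "\<exists>c>0. \<exists>N::nat. \<forall>n\<ge>N. \<forall>S::nat set.
              S \<subseteq> {..<n} \<and> real (card S) \<le> a * (ln d / d) powr (1 / (real r - 1)) * real n \<longrightarrow>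
              hprob n r (d / real ((n - 1) choose (r - 1)))
                (\<lambda>G. \<exists>T. indep_set n G T \<and>
                   real (card (T \<inter> S)) \<ge> \<epsilon> * (ln d / d) powr (1 / (real r - 1)) * real n)
              \<le> exp (- c * real n)"
    proof (rule exI[of _ c], rule conjI[OF c0], rule exI[of _ N], intro allI impI)
      fix n :: nat and S :: "nat set"
      assume nN: "N \<le> n"
      assume SS: "S \<subseteq> {..<n} \<and> real (card S) \<le> a * (ln d / d) powr (1 / (real r - 1)) * real n"
      have Sn: "S \<subseteq> {..<n}" and cS: "real (card S) \<le> a * L * real n" using SS unfolding L_def by auto
      have fS: "finite S" using Sn finite_subset by blast
      have n1: "real n \<ge> (real r - 1) * d + 2"
      proof -
        have "real N \<ge> real (nat \<lceil>(real r - 1) * d\<rceil>) + 2" unfolding N_def by simp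
        moreover have "real (nat \<lceil>(real r - 1) * d\<rceil>) \<ge> (real r - 1) * d" by linarith
        ultimately show ?thesis using nN by linarith
      qed
      have nx: "x * real n \<ge> real r"
      proof -
        have "real N \<ge> real (nat \<lceil>real r / x\<rceil>)" unfolding N_def by simp
        moreover have "real (nat \<lceil>real r / x\<rceil>) \<ge> real r / x" by linarith
        ultimately have "real n \<ge> real r / x" using nN by linarith
        then show ?thesis using x0 by (simp add: field_simps)
      qed
      have rr: "real r - 1 \<ge> 1" using r2 by simp
      have n1': "real n - 1 \<ge> (real r - 1) * d" using n1 by simp
      have rd: "(real r - 1) * d \<ge> real r - 1" using mult_left_mono[of 1 d "real r - 1"] rr d3 by simp
      have "real n \<ge> 2" using n1 rd rr by linarith
      then have nge1: "n \<ge> 1" by simp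
      have "real r \<le> real n" using n1' rd by linarith
      then have rn: "r - 1 \<le> n - 1" by simp
      have cn1: "real (n - 1) = real n - 1" using nge1 by (simp add: of_nat_diff)
      have cr1: "real (r - 1) = real r - 1" using r2 by (simp add: of_nat_diff)
      define B where "B = (n - 1) choose (r - 1)"
      have B_lo: "real B \<ge> d"
      proof -
        have "(real (n-1) / real (r-1)) ^ (r-1) \<le> real B"
          unfolding B_def using binomial_ge_n_over_k_pow_k[OF rn] by simp
        moreover have "real (n-1) / real (r-1) \<ge> 1" using rn r2 by simp
        moreover have "r - 1 > 0" using r2 by simp
        ultimately have "real (n-1) / real (r-1) \<le> real B"
          by (meson order_trans self_le_power)
        moreover have "real (n-1) / real (r-1) \<ge> d" using n1' rr cn1 cr1 by (simp add: field_simps)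
        ultimately show ?thesis by simp
      qed
      have B_hi: "real B \<le> real n ^ (r - 1)"
      proof -
        have "B \<le> (n-1) ^ (r-1)" unfolding B_def using binomial_le_pow[OF rn] .
        also have "\<dots> \<le> n ^ (r-1)" by (simp add: power_mono)
        finally show ?thesis by (metis of_nat_le_iff of_nat_power)
      qed
      have Bpos: "real B > 0" using B_lo d3 by simp
      define p where "p = d / real B"
      have p0: "0 \<le> p" unfolding p_def using d3 Bpos by simp
      have p1: "p \<le> 1" unfolding p_def using B_lo Bpos by simp
      have p_lo: "p \<ge> d / real n ^ (r - 1)" unfolding p_def
        using B_hi Bpos d3 by (simp add: frac_le)
      define k where "k = nat \<lceil>x * real n\<rceil>"
      have kx: "real k \<ge> x * real n" unfolding k_def by linarith
      have kr: "r \<le> k" using kx nx by simp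
      define F where "F = {U. U \<subseteq> S \<and> card U = k}"
      have fF: "finite F" unfolding F_def by (rule finite_subset[of _ "Pow S"]) (auto simp: fS)
      have cF: "card F = card S choose k" unfolding F_def using n_subsets[OF fS] .
      define M where "M = k choose r"
      have step1: "hprob n r p (\<lambda>G. \<exists>T. indep_set n G T \<and>
                   real (card (T \<inter> S)) \<ge> \<epsilon> * (ln d / d) powr (1 / (real r - 1)) * real n)
              \<le> (\<Sum>U\<in>F. hprob n r p (\<lambda>G. \<forall>e\<in>G. \<not> e \<subseteq> U))"
      proof (rule hprob_union[OF p0 p1 fF])
        fix G assume "\<exists>T. indep_set n G T \<and>
                   real (card (T \<inter> S)) \<ge> \<epsilon> * (ln d / d) powr (1 / (real r - 1)) * real n"
        then obtain T where T: "indep_set n G T" and cT: "real (card (T \<inter> S)) \<ge> x * real n"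
          unfolding x_def L_def by (auto simp: mult.assoc)
        have "k \<le> card (T \<inter> S)" unfolding k_def using cT by linarith
        then obtain U where U: "U \<subseteq> T \<inter> S" "card U = k" by (meson obtain_subset_with_card_n)
        have "U \<in> F" unfolding F_def using U by auto
        moreover have "\<forall>e\<in>G. \<not> e \<subseteq> U" using T U unfolding indep_set_def by blast
        ultimately show "\<exists>U\<in>F. \<forall>e\<in>G. \<not> e \<subseteq> U" by blast
      qed
      also have "\<dots> = (\<Sum>U\<in>F. (1 - p) ^ M)"
      proof (rule sum.cong)
        fix U assume "U \<in> F"
        then have "U \<subseteq> {..<n}" "card U = k" unfolding F_def using Sn by auto
        then show "hprob n r p (\<lambda>G. \<forall>e\<in>G. \<not> e \<subseteq> U) = (1 - p) ^ M"
          unfolding M_def using hprob_indep by simp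
      qed simp
      also have "\<dots> = real (card S choose k) * (1 - p) ^ M" using cF by simp
      also have "\<dots> \<le> 2 powr (a * L * real n) * exp (- (p * real M))"
      proof (rule mult_mono)
        have "real (card S choose k) \<le> 2 ^ card S"
          by (metis binomial_le_pow2 numeral_power_eq_of_nat_cancel_iff of_nat_le_iff)
        also have "\<dots> = 2 powr (real (card S))" by (simp add: powr_realpow)
        also have "\<dots> \<le> 2 powr (a * L * real n)" using cS by simp
        finally show "real (card S choose k) \<le> 2 powr (a * L * real n)" .
        have "(1 - p) ^ M \<le> exp (- p) ^ M"
          using p1 by (intro power_mono) (simp_all add: add.commute[of 1] exp_ge_add_one_self[of "-p", simplified])
        also have "\<dots> = exp (- (p * real M))" by (simp add: exp_of_nat_mult[symmetric] mult.commute)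
        finally show "(1 - p) ^ M \<le> exp (- (p * real M))" .
      qed (simp_all add: p1)
      also have "\<dots> \<le> exp (- c * real n)"
      proof -
        have "p * real M \<ge> d / real n ^ (r - 1) * (real k / real r) ^ r"
        proof (rule mult_mono[OF p_lo])
          show "(real k / real r) ^ r \<le> real M" unfolding M_def using binomial_ge_n_over_k_pow_k[OF kr] by simp
        qed (use p0 in simp_all)
        moreover have "(real k / real r) ^ r \<ge> (x * real n / real r) ^ r"
          using kx nx x0 r2 by (intro power_mono divide_right_mono) simp_all
        ultimately have "p * real M \<ge> d / real n ^ (r - 1) * (x * real n / real r) ^ r"
          using d3 by (smt (verit) mult_left_mono divide_nonneg_nonneg of_nat_0_le_iff zero_le_power)
        moreover have "d / real n ^ (r - 1) * (x * real n / real r) ^ r = \<epsilon> ^ r * ln d * L * real n / real r ^ r"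
        proof -
          have np: "real n > 0" using nge1 by simp
          have "real n ^ r = real n ^ (r - 1) * real n" using r2
            by (metis Suc_pred' less_le_trans mult.commute pos2 power_Suc)
          then have "d / real n ^ (r - 1) * (x * real n / real r) ^ r = d * x ^ r * real n / real r ^ r"
            using np by (simp add: power_mult_distrib power_divide field_simps)
          also have "d * x ^ r = \<epsilon> ^ r * ln d * L" unfolding x_def using Lr d3
            by (simp add: power_mult_distrib field_simps)
          finally show ?thesis by simp
        qed
        moreover have "\<epsilon> ^ r * ln d * L * real n / real r ^ r \<ge> 2 * a * ln 2 * L * real n"
        proof -
          have "\<epsilon> ^ r * ln d \<ge> \<epsilon> ^ r * K" using dK eps by simp
          also have "\<epsilon> ^ r * K = 2 * a * ln 2 * real r ^ r" unfolding K_def using eps by simp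
          finally have "\<epsilon> ^ r * ln d / real r ^ r \<ge> 2 * a * ln 2" using r2 by (simp add: field_simps)
          then have "(\<epsilon> ^ r * ln d / real r ^ r) * (L * real n) \<ge> 2 * a * ln 2 * (L * real n)"
            using L0 by (intro mult_right_mono) simp_all
          then show ?thesis by (simp add: field_simps)
        qed
        ultimately have pM: "p * real M \<ge> 2 * a * ln 2 * L * real n" by linarith
        have "2 powr (a * L * real n) = exp (a * ln 2 * L * real n)" by (simp add: powr_def mult_ac)
        then have "2 powr (a * L * real n) * exp (- (p * real M)) = exp (a * ln 2 * L * real n - p * real M)"
          by (simp add: exp_diff exp_minus field_simps)
        also have "\<dots> \<le> exp (- c * real n)" unfolding c_def using pM by (simp add: mult_ac)
        finally show ?thesis .
      qed
      finally have X: "hprob n r p (\<lambda>G. \<exists>T. indep_set n G T \<and>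
                   real (card (T \<inter> S)) \<ge> \<epsilon> * (ln d / d) powr (1 / (real r - 1)) * real n)
              \<le> exp (- c * real n)" .
      show "hprob n r (d / real ((n - 1) choose (r - 1)))
                (\<lambda>G. \<exists>T. indep_set n G T \<and>
                   real (card (T \<inter> S)) \<ge> \<epsilon> * (ln d / d) powr (1 / (real r - 1)) * real n)
              \<le> exp (- c * real n)" using X[unfolded p_def B_def] .
    qed
  qed
qed

end
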